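(* Let $p$ be a prime and let $\alpha\in\mathbf{Bad}$ with $\alpha>0$. Suppose there is a sequence of natural numbers $\{\ell_m\}_{m\in\mathbb{N}}$ such that $p^{\ell_m}\alpha$ is not an infinite loop mod $p^m$ for every $m\in\mathbb{N}$. Then $m_p(\alpha)=0$.
   Context: $\mathbf{Bad}=\{\alpha\in\mathbb{R}:\inf_{q\in\mathbb{N}}q\|q\alpha\|>0\}$, $\|x\|$ the distance to the nearest integer; $m_p(\alpha)=\inf_{q\in\mathbb{N}} q\,|q|_p\,\|q\alpha\|$ with $|\cdot|_p$ the $p$-adic absolute value. For $\alpha$ with continued fraction $[a_0;a_1,\ldots]$ and convergent denominators $q_{-1}=0,q_0=1,q_k=a_kq_{k-1}+q_{k-2}$, the semi-convergent denominators are $mq_k+q_{k-1}$ for $0\le m\le a_{k+1}$. A real $\alpha>0$ is an \emph{infinite loop mod $n$} if none of its semi-convergent denominators is divisible by $n$, except $q_{-1}=0$. *)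

theory Defs
  imports "HOL-Analysis.Analysis" "HOL-Computational_Algebra.Primes"
begin

definition dist_int :: "real \<Rightarrow> real" where
  "dist_int x = \<bar>x - of_int (round x)\<bar>"

definition Bad :: "real set" where
  "Bad = {\<alpha>. (INF q\<in>{1::nat..}. real q * dist_int (real q * \<alpha>)) > 0}"

definition padic_abs :: "nat \<Rightarrow> nat \<Rightarrow> real" where
  "padic_abs p q = (if q = 0 then 0 else inverse (real p) ^ multiplicity p q)"

definition m_p :: "nat \<Rightarrow> real \<Rightarrow> real" where
  "m_p p \<alpha> = (INF q\<in>{1::nat..}. real q * padic_abs p q * dist_int (real q * \<alpha>))"

fun cf_rem :: "real \<Rightarrow> nat \<Rightarrow> real" where
  "cf_rem \<alpha> 0 = \<alpha>"
| "cf_rem \<alpha> (Suc k) = 1 / frac (cf_rem \<alpha> k)"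

definition cf_a :: "real \<Rightarrow> nat \<Rightarrow> int" where
  "cf_a \<alpha> k = \<lfloor>cf_rem \<alpha> k\<rfloor>"

text \<open>Shifted convergent denominators: cf_den \<alpha> n = q_{n-1}, so
  cf_den \<alpha> 0 = q_{-1} = 0, cf_den \<alpha> 1 = q_0 = 1,
  q_k = a_k q_{k-1} + q_{k-2}.\<close>
fun cf_den :: "real \<Rightarrow> nat \<Rightarrow> int" where
  "cf_den \<alpha> 0 = 0"
| "cf_den \<alpha> (Suc 0) = 1"
| "cf_den \<alpha> (Suc (Suc n)) = cf_a \<alpha> (Suc n) * cf_den \<alpha> (Suc n) + cf_den \<alpha> n"

text \<open>Semi-convergent denominators m q_k + q_{k-1}, k \<ge> 0, 0 \<le> m \<le> a_{k+1}.\<close>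
definition semiconv_dens :: "real \<Rightarrow> int set" where
  "semiconv_dens \<alpha> = {int m * cf_den \<alpha> (Suc k) + cf_den \<alpha> k | k m. int m \<le> cf_a \<alpha> (Suc k)}"

text \<open>\<alpha> > 0 is an infinite loop mod n if no semi-convergent denominator other than
  q_{-1} = 0 is divisible by n.\<close>
definition infinite_loop_mod :: "nat \<Rightarrow> real \<Rightarrow> bool" where
  "infinite_loop_mod n \<alpha> \<longleftrightarrow> \<alpha> > 0 \<and>
     (\<forall>s\<in>semiconv_dens \<alpha>. s \<noteq> 0 \<longrightarrow> \<not> int n dvd s)"

end

theory Submission
  imports Defs
begin

fun cf_num :: "real \<Rightarrow> nat \<Rightarrow> int" where
  "cf_num \<alpha> 0 = 1"
| "cf_num \<alpha> (Suc 0) = cf_a \<alpha> 0"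
| "cf_num \<alpha> (Suc (Suc n)) = cf_a \<alpha> (Suc n) * cf_num \<alpha> (Suc n) + cf_num \<alpha> n"

definition cf_err :: "real \<Rightarrow> nat \<Rightarrow> real" where
  "cf_err b n = of_int (cf_den b n) * b - of_int (cf_num b n)"

lemma err_rec: "cf_err b (Suc (Suc n)) = of_int (cf_a b (Suc n)) * cf_err b (Suc n) + cf_err b n"
  by (simp add: cf_err_def algebra_simps)

lemma rem_irr: assumes "b \<notin> \<rat>" shows "cf_rem b n \<notin> \<rat>"
proof (induction n)
  case 0 then show ?case using assms by simp
next
  case (Suc n)
  have "frac (cf_rem b n) \<notin> \<rat>"
  proof
    assume "frac (cf_rem b n) \<in> \<rat>"
    then have "frac (cf_rem b n) + of_int \<lfloor>cf_rem b n\<rfloor> \<in> \<rat>" by simp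
    then show False using Suc by (simp add: frac_def)
  qed
  then show ?case by (simp add: divide_inverse Rats_inverse_iff)
qed

lemma frac_pos: assumes "b \<notin> \<rat>" shows "0 < frac (cf_rem b n)"
proof -
  have "cf_rem b n \<notin> \<int>" using rem_irr[OF assms, of n] Ints_subset_Rats by blast
  then show ?thesis using frac_ge_0[of "cf_rem b n"] frac_eq_0_iff by (metis order_le_less)
qed

lemma a_ge1: assumes "b \<notin> \<rat>" shows "cf_a b (Suc n) \<ge> 1"
proof -
  have "cf_rem b (Suc n) > 1" using frac_pos[OF assms, of n] frac_lt_1[of "cf_rem b n"]
    by (simp add: divide_simps)
  then show ?thesis unfolding cf_a_def by linarith
qed

lemma den_mono: assumes "b \<notin> \<rat>"
  shows "0 \<le> cf_den b n \<and> cf_den b n \<le> cf_den b (Suc n) \<and> 1 \<le> cf_den b (Suc n)"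
proof (induction n)
  case 0 then show ?case by simp
next
  case (Suc n)
  have a: "cf_a b (Suc n) \<ge> 1" by (rule a_ge1[OF assms])
  have "cf_den b (Suc n) \<le> cf_a b (Suc n) * cf_den b (Suc n)"
    using a Suc by (metis mult_1 mult_right_mono order.trans zero_le_one)
  then show ?case using Suc by (simp only: cf_den.simps) linarith
qed

lemma err_step: assumes "b \<notin> \<rat>"
  shows "cf_err b (Suc n) = - cf_err b n * frac (cf_rem b n)"
proof (induction n)
  case 0 then show ?case by (simp add: cf_err_def cf_a_def frac_def)
next
  case (Suc n)
  have f: "frac (cf_rem b n) > 0" by (rule frac_pos[OF assms])
  have en: "cf_err b n = - cf_err b (Suc n) * cf_rem b (Suc n)"
    using Suc f by (simp add: field_simps)
  have "cf_err b (Suc (Suc n)) = cf_err b (Suc n) * (of_int (cf_a b (Suc n)) - cf_rem b (Suc n))"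
    by (simp add: err_rec en algebra_simps)
  also have "\<dots> = - cf_err b (Suc n) * frac (cf_rem b (Suc n))"
    by (simp add: cf_a_def frac_def algebra_simps)
  finally show ?case .
qed

lemma det: "of_int (cf_den b (Suc n)) * cf_err b n - of_int (cf_den b n) * cf_err b (Suc n) = (-1) ^ Suc n"
proof (induction n)
  case 0 then show ?case by (simp add: cf_err_def)
next
  case (Suc n)
  then show ?case by (simp add: err_rec algebra_simps)
qed

lemma err_abs: assumes "b \<notin> \<rat>"
  shows "\<bar>cf_err b n\<bar> * (of_int (cf_den b (Suc n)) + of_int (cf_den b n) * frac (cf_rem b n)) = 1"
proof -
  have "cf_err b n * (of_int (cf_den b (Suc n)) + of_int (cf_den b n) * frac (cf_rem b n)) = (-1) ^ Suc n"
    using det[of b n] err_step[OF assms, of n] by (simp add: algebra_simps)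
  then have "\<bar>cf_err b n * (of_int (cf_den b (Suc n)) + of_int (cf_den b n) * frac (cf_rem b n))\<bar> = 1"
    by simp
  moreover have "of_int (cf_den b (Suc n)) + of_int (cf_den b n) * frac (cf_rem b n) \<ge> 0"
    using den_mono[OF assms, of n] frac_ge_0[of "cf_rem b n"] by simp
  ultimately show ?thesis by (simp add: abs_mult)
qed

lemma dist_int_le: "dist_int y \<le> \<bar>y - of_int z\<bar>"
  unfolding dist_int_def by (rule round_diff_minimal)

lemma dist_int_nonneg: "dist_int y \<ge> 0"
  unfolding dist_int_def by simp

lemma bad_irr:
  assumes c: "c > 0" and bad: "\<forall>q::nat. q \<ge> 1 \<longrightarrow> c \<le> real q * dist_int (real q * b)"
  shows "b \<notin> \<rat>"
proof
  assume "b \<in> \<rat>"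
  then obtain x y where y: "y > 0" and b: "b = of_int x / of_int y" by (elim Rats_cases')
  have "real (nat y) * b = of_int x" using y b by simp
  then have d0: "dist_int (real (nat y) * b) = 0" unfolding dist_int_def by simp
  have "nat y \<ge> 1" using y by simp
  then have "c \<le> real (nat y) * dist_int (real (nat y) * b)" by (rule bad[rule_format])
  then show False using c d0 by simp
qed

lemma semiconv_bound:
  assumes c: "c > 0" and bad: "\<forall>q::nat. q \<ge> 1 \<longrightarrow> c \<le> real q * dist_int (real q * b)"
    and s: "s \<in> semiconv_dens b" "s \<noteq> 0"
  shows "s > 0 \<and> real_of_int s * dist_int (real_of_int s * b) \<le> 1/c + 1"
proof -
  have irr: "b \<notin> \<rat>" by (rule bad_irr[OF c bad])
  obtain k m where sd: "s = int m * cf_den b (Suc k) + cf_den b k" and mk: "int m \<le> cf_a b (Suc k)"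
    using s(1) unfolding semiconv_dens_def by blast
  define A where "A = cf_den b (Suc k)"
  define B where "B = cf_den b k"
  define f where "f = frac (cf_rem b k)"
  define x where "x = \<bar>cf_err b k\<bar>"
  have AB: "0 \<le> B" "B \<le> A" "1 \<le> A" using den_mono[OF irr, of k] by (auto simp: A_def B_def)
  have f: "0 < f" "f < 1" using frac_pos[OF irr, of k] frac_lt_1 by (auto simp: f_def)
  have x: "x * (real_of_int A + real_of_int B * f) = 1"
    using err_abs[OF irr, of k] by (simp add: x_def A_def B_def f_def)
  have x0: "x \<ge> 0" by (simp add: x_def)
  have "int m * A \<ge> 0" using AB by simp
  then have spos: "s > 0" using sd AB s(2) unfolding A_def B_def by linarith
  have "real_of_int (cf_a b (Suc k)) \<le> cf_rem b (Suc k)" unfolding cf_a_def by simp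
  then have "real m \<le> 1 / f" using mk by (simp add: f_def)
  then have mf: "real m * f \<le> 1" using f by (simp add: field_simps)
  have E: "real_of_int s * b - of_int (int m * cf_num b (Suc k) + cf_num b k) = cf_err b k * (1 - real m * f)"
  proof -
    have "real_of_int s * b - of_int (int m * cf_num b (Suc k) + cf_num b k) = real m * cf_err b (Suc k) + cf_err b k"
      by (simp add: sd cf_err_def algebra_simps)
    then show ?thesis using err_step[OF irr, of k] by (simp add: f_def algebra_simps)
  qed
  have "dist_int (real_of_int s * b) \<le> x * (1 - real m * f)"
    using dist_int_le[of "real_of_int s * b" "int m * cf_num b (Suc k) + cf_num b k"] E mf
    by (simp add: x_def abs_mult)
  also have "\<dots> \<le> x" using x0 mf f by (simp add: mult_left_le)
  finally have d: "dist_int (real_of_int s * b) \<le> x" .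
  have Bf: "real_of_int B * f \<ge> 0" using AB f by simp
  have xx: "x * real_of_int A + x * (real_of_int B * f) = 1" using x by (simp add: distrib_left)
  have "x * (real_of_int B * f) \<ge> 0" using x0 Bf by simp
  then have Ax: "real_of_int A * x \<le> 1" using xx by (simp add: mult.commute)
  have "nat A \<ge> 1" using AB by simp
  then have "c \<le> real (nat A) * dist_int (real (nat A) * b)" by (rule bad[rule_format])
  also have "\<dots> \<le> real_of_int A * \<bar>cf_err b (Suc k)\<bar>"
    using dist_int_le[of "real_of_int A * b" "cf_num b (Suc k)"] AB
    by (simp add: cf_err_def A_def mult_left_mono)
  also have "\<dots> = (real_of_int A * x) * f" using err_step[OF irr, of k] f
    by (simp add: x_def f_def abs_mult)
  also have "\<dots> \<le> f" using Ax f by (simp add: mult_left_le_one_le)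
  finally have cf: "c \<le> f" .
  have "real_of_int s * dist_int (real_of_int s * b) \<le> real_of_int s * x"
    using d spos by (simp add: mult_left_mono)
  also have "\<dots> \<le> (real m + 1) * (real_of_int A * x)"
  proof -
    have "s \<le> (int m + 1) * A" using AB sd unfolding A_def B_def by (simp add: distrib_right)
    then have "real_of_int s \<le> real_of_int ((int m + 1) * A)" by (simp only: of_int_le_iff)
    then have "real_of_int s \<le> (real m + 1) * real_of_int A" by simp
    then show ?thesis using x0 by (metis mult.assoc mult_right_mono)
  qed
  also have "\<dots> \<le> real m + 1" by (rule mult_left_le) (use Ax in auto)
  also have "\<dots> \<le> 1/f + 1" using \<open>real m \<le> 1 / f\<close> by simp
  also have "\<dots> \<le> 1/c + 1" using frac_le[of 1 1 c f] cf c by simp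
  finally show ?thesis using spos by blast
qed


lemma padic_le1: "padic_abs p q \<le> 1" if "p \<ge> 1"
proof -
  have h: "0 \<le> inverse (real p)" "inverse (real p) \<le> 1" using that by (auto simp: inverse_le_1_iff)
  show ?thesis by (simp add: padic_abs_def power_le_one h)
qed

lemma padic_nonneg: "padic_abs p q \<ge> 0"
  by (simp add: padic_abs_def)

theorem corollary3p4:
  fixes p :: nat and \<alpha> :: real and l :: "nat \<Rightarrow> nat"
  assumes "prime p"
    and "\<alpha> \<in> Bad" and "\<alpha> > 0"
    and "\<And>m. m \<ge> 1 \<Longrightarrow> \<not> infinite_loop_mod (p ^ m) (real p ^ l m * \<alpha>)"
  shows "m_p p \<alpha> = 0"
proof (rule ccontr)
  assume ne: "m_p p \<alpha> \<noteq> 0"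
  define c where "c = m_p p \<alpha>"
  have p2: "p \<ge> 2" using assms(1) prime_ge_2_nat by blast
  have nn: "\<And>q. real q * padic_abs p q * dist_int (real q * \<alpha>) \<ge> 0"
    using padic_nonneg dist_int_nonneg by simp
  have "c \<ge> 0" unfolding c_def m_p_def
    by (rule cINF_greatest) (use nn in auto)
  then have c: "c > 0" using ne c_def by simp
  have low: "c \<le> real q * padic_abs p q * dist_int (real q * \<alpha>)" if "q \<ge> 1" for q
    unfolding c_def m_p_def
    by (rule cINF_lower) (use that nn in \<open>auto simp: bdd_below_def\<close>)
  have badb: "c \<le> real q * dist_int (real q * (real p ^ L * \<alpha>))" if "q \<ge> 1" for q L
  proof -
    have q0: "q \<noteq> 0" "p ^ L \<noteq> 0" using that p2 by auto
    have mult: "multiplicity p (q * p ^ L) = multiplicity p q + L"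
      using prime_elem_multiplicity_mult_distrib[of p q "p ^ L"] q0 assms(1)
        multiplicity_same_power[of p L] p2 by simp
    have pa: "padic_abs p (q * p ^ L) = padic_abs p q * inverse (real p) ^ L"
      using q0 mult by (simp add: padic_abs_def power_add)
    have "c \<le> real (q * p ^ L) * padic_abs p (q * p ^ L) * dist_int (real (q * p ^ L) * \<alpha>)"
      using low[of "q * p ^ L"] that p2 by simp
    also have "\<dots> = real q * padic_abs p q * dist_int (real q * (real p ^ L * \<alpha>))"
      using p2 by (simp add: pa field_simps power_inverse)
    also have "\<dots> \<le> real q * dist_int (real q * (real p ^ L * \<alpha>))"
    proof -
      have "real q * padic_abs p q * dist_int (real q * (real p ^ L * \<alpha>))
          \<le> real q * 1 * dist_int (real q * (real p ^ L * \<alpha>))"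
        using padic_le1[of p q] p2 dist_int_nonneg by (intro mult_right_mono mult_left_mono) auto
      then show ?thesis by simp
    qed
    finally show ?thesis .
  qed
  define K where "K = 1/c + 1"
  define M where "M = nat \<lceil>K / c\<rceil> + 1"
  have M1: "M \<ge> 1" by (simp add: M_def)
  have "real M < 2 ^ M" using less_exp[of M] by (metis of_nat_less_iff of_nat_numeral of_nat_power)
  also have "\<dots> \<le> real p ^ M" using p2 by (intro power_mono) auto
  finally have "K / c < real p ^ M" using M_def by linarith
  then have KM: "K / real p ^ M < c" using c p2 by (simp add: field_simps)
  define b where "b = real p ^ l M * \<alpha>"
  have bpos: "b > 0" using assms(3) p2 by (simp add: b_def)
  obtain s where s: "s \<in> semiconv_dens b" "s \<noteq> 0" "int (p ^ M) dvd s"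
    using assms(4)[OF M1] bpos unfolding infinite_loop_mod_def b_def by blast
  have bb: "\<forall>q::nat. q \<ge> 1 \<longrightarrow> c \<le> real q * dist_int (real q * b)"
    using badb unfolding b_def by blast
  from semiconv_bound[OF c bb s(1,2)]
  have spos: "s > 0" and sb: "real_of_int s * dist_int (real_of_int s * b) \<le> K" by (auto simp: K_def)
  define n where "n = nat s"
  have n: "n \<ge> 1" "real n = real_of_int s" using spos by (auto simp: n_def)
  have "p ^ M dvd n" using s(3) spos unfolding n_def
    by (metis int_dvd_int_iff int_nat_eq less_le)
  then have "multiplicity p n \<ge> M" using n p2 by (intro multiplicity_geI) auto
  then have pa: "padic_abs p n \<le> inverse (real p) ^ M" using n p2
  proof -
    have h: "0 \<le> inverse (real p)" "inverse (real p) \<le> 1" using p2 by (auto simp: inverse_le_1_iff)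
    then have "inverse (real p) ^ multiplicity p n \<le> inverse (real p) ^ M"
      using \<open>multiplicity p n \<ge> M\<close> by (intro power_decreasing) auto
    then show ?thesis using n by (simp add: padic_abs_def)
  qed
  have "c \<le> real (n * p ^ l M) * padic_abs p (n * p ^ l M) * dist_int (real (n * p ^ l M) * \<alpha>)"
    using low[of "n * p ^ l M"] n p2 by simp
  also have "\<dots> = real n * padic_abs p n * dist_int (real n * b)"
  proof -
    have q0: "n \<noteq> 0" "p ^ l M \<noteq> 0" using n p2 by auto
    have mult: "multiplicity p (n * p ^ l M) = multiplicity p n + l M"
      using prime_elem_multiplicity_mult_distrib[of p n "p ^ l M"] q0 assms(1)
        multiplicity_same_power[of p "l M"] p2 by simp
    have "padic_abs p (n * p ^ l M) = padic_abs p n * inverse (real p) ^ l M"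
      using q0 mult by (simp add: padic_abs_def power_add)
    then show ?thesis using p2 by (simp add: b_def field_simps power_inverse)
  qed
  also have "\<dots> = padic_abs p n * (real n * dist_int (real n * b))" by simp
  also have "\<dots> \<le> inverse (real p) ^ M * K"
    using pa sb n padic_nonneg[of p n] dist_int_nonneg[of "real n * b"]
    by (intro mult_mono) auto
  also have "\<dots> = K / real p ^ M" by (simp add: field_simps power_inverse)
  finally show False using KM by simp
qed

end
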